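(* Let $\kappa$ be an infinite cardinal and $\mathbb{A}$ a countable Boolean algebra. Let $\varphi,\psi\colon\mathbb{A}\to\mathbb{M}_\kappa$ be homomorphisms such that $\bigvee\{\varphi(A)\triangle\psi(A)\colon A\in\mathbb{A}\}=1$. Then for each $\varepsilon>0$ there is $C\in\mathbb{A}$ such that $\lambda_\kappa(\varphi(C)\triangle\psi(C))>1/4-\varepsilon$.
   Context: $\mathbb{M}_\kappa=Bor(2^\kappa)/\mathcal{N}_\kappa$ is the measure algebra of the standard product measure $\lambda_\kappa$ on $2^\kappa$ ($\mathcal{N}_\kappa$ the null sets); $\lambda_\kappa$ also denotes the induced measure on $\mathbb{M}_\kappa$, which is a complete Boolean algebra. *)

theory Defs
  imports "HOL-Probability.Probability"
begin

text \<open>The standard product measure lambda_kappa on 2^kappa, where kappa is the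
  cardinality of the (infinite) index type 'k: the product of kappa copies of the
  fair coin measure on bool.\<close>
definition lambda_k :: "('k \<Rightarrow> bool) measure" where
  "lambda_k = PiM UNIV (\<lambda>_::'k. measure_pmf (bernoulli_pmf (1/2)))"

text \<open>Elements of the measure algebra M_kappa are represented by measurable sets,
  two sets denoting the same element iff their symmetric difference is null.\<close>
definition symd :: "'a set \<Rightarrow> 'a set \<Rightarrow> 'a set" where
  "symd X Y = (X - Y) \<union> (Y - X)"

definition ae_eq :: "('k \<Rightarrow> bool) set \<Rightarrow> ('k \<Rightarrow> bool) set \<Rightarrow> bool" where
  "ae_eq X Y \<longleftrightarrow> emeasure lambda_k (symd X Y) = 0"

definition ae_le :: "('k \<Rightarrow> bool) set \<Rightarrow> ('k \<Rightarrow> bool) set \<Rightarrow> bool" where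
  "ae_le X Y \<longleftrightarrow> emeasure lambda_k (X - Y) = 0"

definition malg_hom :: "('a::boolean_algebra \<Rightarrow> ('k \<Rightarrow> bool) set) \<Rightarrow> bool" where
  "malg_hom f \<longleftrightarrow>
     (\<forall>a. f a \<in> sets lambda_k) \<and>
     ae_eq (f bot) {} \<and> ae_eq (f top) (space lambda_k) \<and>
     (\<forall>a b. ae_eq (f (inf a b)) (f a \<inter> f b)) \<and>
     (\<forall>a b. ae_eq (f (sup a b)) (f a \<union> f b)) \<and>
     (\<forall>a. ae_eq (f (- a)) (space lambda_k - f a))"

definition malg_is_Sup :: "('k \<Rightarrow> bool) set set \<Rightarrow> ('k \<Rightarrow> bool) set \<Rightarrow> bool" where
  "malg_is_Sup S U \<longleftrightarrow> U \<in> sets lambda_k \<and> (\<forall>X\<in>S. ae_le X U) \<and>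
     (\<forall>V\<in>sets lambda_k. (\<forall>X\<in>S. ae_le X V) \<longrightarrow> ae_le U V)"

end

theory Submission imports Defs begin
definition xr :: "'a::boolean_algebra \<Rightarrow> 'a \<Rightarrow> 'a" where
  "xr a b = sup (inf a (- b)) (inf (- a) b)"

fun xalg :: "'a::boolean_algebra list \<Rightarrow> 'a list" where
  "xalg [] = [bot]"
| "xalg (A # As) = xalg As @ map (\<lambda>c. xr c A) (xalg As)"

lemma length_xalg: "length (xalg As) = 2 ^ length As"
  by (induction As) auto

lemma sum_list_const_len: "sum_list (map (\<lambda>c. (k::real)) xs) = real (length xs) * k"
  by (induction xs) (auto simp: algebra_simps)

lemma sum_list_lt:
  fixes f :: "'c \<Rightarrow> real"
  assumes "xs \<noteq> []" "\<And>x. x \<in> set xs \<Longrightarrow> f x < v"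
  shows "sum_list (map f xs) < real (length xs) * v"
  using assms
proof (induction xs)
  case Nil then show ?case by simp
next
  case (Cons a xs)
  show ?case
  proof (cases "xs = []")
    case True then show ?thesis using Cons by simp
  next
    case False
    then have "sum_list (map f xs) < real (length xs) * v" using Cons by auto
    moreover have "f a < v" using Cons by auto
    ultimately show ?thesis by (simp add: algebra_simps)
  qed
qed

lemma (in finite_measure) munion:
  assumes "A \<in> sets M" "B \<in> sets M" "A \<inter> B = {}" "C = A \<union> B"
  shows "measure M C = measure M A + measure M B"
  using assms finite_measure_Union by blast

lemma (in finite_measure) sum_xalg:
  fixes D :: "'c::boolean_algebra \<Rightarrow> 'a set"
  assumes Dm: "\<And>c. D c \<in> sets M"
    and Dbot: "AE x in M. x \<notin> D bot"
    and Dxr: "\<And>c a. AE x in M. (x \<in> D (xr c a)) = ((x \<in> D c) \<noteq> (x \<in> D a))"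
    and W: "W \<in> sets M"
  shows "2 * sum_list (map (\<lambda>c. measure M (D c \<inter> W)) (xalg As))
         = 2 ^ length As * measure M ((\<Union>a\<in>set As. D a) \<inter> W)"
  using W
proof (induction As arbitrary: W)
  case Nil
  have "measure M (D bot \<inter> W) = measure M {}"
    by (rule measure_eq_AE) (use Dbot Dm Nil in auto)
  then show ?case by simp
next
  case (Cons A As)
  let ?U = "\<Union>a\<in>set As. D a"
  have Um: "?U \<in> sets M" using Dm by auto
  have key: "measure M (D c \<inter> W) + measure M (D (xr c A) \<inter> W)
     = 2 * measure M (D c \<inter> (W - D A)) + measure M (D A \<inter> W)" for c
  proof -
    let ?X = "D c" and ?Y = "D A"
    have "measure M (D (xr c A) \<inter> W) = measure M (symd ?X ?Y \<inter> W)"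
      by (rule measure_eq_AE) (use Dxr[of c A] Dm Cons.prems in \<open>auto simp: symd_def elim!: AE_mp\<close>)
    moreover have "measure M (?X \<inter> W) = measure M (?X \<inter> (W - ?Y)) + measure M (?Y \<inter> W \<inter> ?X)"
      by (rule munion) (use Dm Cons.prems in auto)
    moreover have "measure M (symd ?X ?Y \<inter> W) = measure M (?X \<inter> (W - ?Y)) + measure M (?Y \<inter> W - ?X)"
      by (rule munion) (use Dm Cons.prems in \<open>auto simp: symd_def\<close>)
    moreover have "measure M (?Y \<inter> W) = measure M (?Y \<inter> W \<inter> ?X) + measure M (?Y \<inter> W - ?X)"
      by (rule munion) (use Dm Cons.prems in auto)
    ultimately show ?thesis by simp
  qed
  have IH: "2 * sum_list (map (\<lambda>c. measure M (D c \<inter> (W - D A))) (xalg As))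
         = 2 ^ length As * measure M (?U \<inter> (W - D A))"
    using Cons.IH[of "W - D A"] Cons.prems Dm by auto
  have U2: "measure M ((\<Union>a\<in>set (A # As). D a) \<inter> W) = measure M (?U \<inter> (W - D A)) + measure M (D A \<inter> W)"
    by (rule munion) (use Dm Cons.prems Um in auto)
  have "sum_list (map (\<lambda>c. measure M (D c \<inter> W)) (xalg (A # As)))
      = sum_list (map (\<lambda>c. measure M (D c \<inter> W) + measure M (D (xr c A) \<inter> W)) (xalg As))"
    by (simp add: sum_list_addf o_def)
  also have "\<dots> = sum_list (map (\<lambda>c. 2 * measure M (D c \<inter> (W - D A)) + measure M (D A \<inter> W)) (xalg As))"
    using key by simp
  also have "\<dots> = 2 * sum_list (map (\<lambda>c. measure M (D c \<inter> (W - D A))) (xalg As)) + 2 ^ length As * measure M (D A \<inter> W)"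
    by (simp add: sum_list_addf sum_list_const_len length_xalg sum_list_const_mult)
  finally show ?case using IH U2 by (simp add: algebra_simps)
qed

lemma prob_lambda: "prob_space (lambda_k :: ('k \<Rightarrow> bool) measure)"
  unfolding lambda_k_def by (intro prob_space_PiM prob_space_measure_pmf)

lemma ae_eq_AE:
  assumes "X \<in> sets lambda_k" "Y \<in> sets lambda_k" "ae_eq X Y"
  shows "AE x in lambda_k. (x \<in> X) = (x \<in> Y)"
proof -
  have "symd X Y \<in> null_sets lambda_k"
    using assms by (intro null_setsI) (auto simp: ae_eq_def symd_def)
  then show ?thesis by (rule AE_I') (auto simp: symd_def)
qed

lemma hom_facts:
  assumes "malg_hom f"
  shows "f a \<in> sets lambda_k"
    and "AE x in lambda_k. x \<notin> f bot"
    and "AE x in lambda_k. (x \<in> f (xr a b)) = ((x \<in> f a) \<noteq> (x \<in> f b))"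
proof -
  have m: "\<And>a. f a \<in> sets lambda_k" using assms by (simp add: malg_hom_def)
  then show "f a \<in> sets lambda_k" .
  show "AE x in lambda_k. x \<notin> f bot"
    using ae_eq_AE[of "f bot" "{}"] m assms by (auto simp: malg_hom_def)
  have i: "\<And>a b. AE x in lambda_k. (x \<in> f (inf a b)) = (x \<in> f a \<inter> f b)"
    by (intro ae_eq_AE) (use m assms in \<open>auto simp: malg_hom_def\<close>)
  have s: "\<And>a b. AE x in lambda_k. (x \<in> f (sup a b)) = (x \<in> f a \<union> f b)"
    by (intro ae_eq_AE) (use m assms in \<open>auto simp: malg_hom_def\<close>)
  have n: "\<And>a. AE x in lambda_k. (x \<in> f (- a)) = (x \<in> space lambda_k - f a)"
    by (intro ae_eq_AE) (use m assms in \<open>auto simp: malg_hom_def\<close>)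
  show "AE x in lambda_k. (x \<in> f (xr a b)) = ((x \<in> f a) \<noteq> (x \<in> f b))"
    using s[of "inf a (- b)" "inf (- a) b"] i[of a "- b"] i[of "- a" b] n[of a] n[of b]
      AE_space[of lambda_k]
    unfolding xr_def by eventually_elim auto
qed

theorem proposition7p9:
  fixes \<phi> \<psi> :: "'a::{boolean_algebra,countable} \<Rightarrow> ('k \<Rightarrow> bool) set"
  assumes "infinite (UNIV :: 'k set)"
    and "malg_hom \<phi>" and "malg_hom \<psi>"
    and "malg_is_Sup (range (\<lambda>A. symd (\<phi> A) (\<psi> A))) (space lambda_k)"
    and "(\<epsilon>::real) > 0"
  shows "\<exists>C. measure lambda_k (symd (\<phi> C) (\<psi> C)) > 1/4 - \<epsilon>"
proof (rule ccontr)
  assume contra: "\<not> ?thesis"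
  interpret P: prob_space "lambda_k :: ('k \<Rightarrow> bool) measure" by (rule prob_lambda)
  define D where "D c = symd (\<phi> c) (\<psi> c)" for c
  have Dm: "\<And>c. D c \<in> sets lambda_k"
    using hom_facts(1)[OF assms(2)] hom_facts(1)[OF assms(3)] by (auto simp: D_def symd_def)
  have Dbot: "AE x in lambda_k. x \<notin> D bot"
    using hom_facts(2)[OF assms(2)] hom_facts(2)[OF assms(3)]
    by eventually_elim (auto simp: D_def symd_def)
  have Dxr: "\<And>c a. AE x in lambda_k. (x \<in> D (xr c a)) = ((x \<in> D c) \<noteq> (x \<in> D a))"
  proof -
    fix c a
    show "AE x in lambda_k. (x \<in> D (xr c a)) = ((x \<in> D c) \<noteq> (x \<in> D a))"
      using hom_facts(3)[OF assms(2), of c a] hom_facts(3)[OF assms(3), of c a]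
      by eventually_elim (auto simp: D_def symd_def)
  qed
  define V where "V = (\<Union>c. D c)"
  have Vm: "V \<in> sets lambda_k" unfolding V_def using Dm by (auto intro!: sets.countable_UN)
  have "\<forall>X\<in>range D. ae_le X V" proof
    fix X assume "X \<in> range D"
    then have "X - V = {}" unfolding V_def by auto
    then show "ae_le X V" unfolding ae_le_def by (metis emeasure_empty)
  qed
  then have "ae_le (space lambda_k) V"
    using assms(4) Vm unfolding malg_is_Sup_def D_def by blast
  then have "emeasure lambda_k (space lambda_k - V) = 0" by (simp add: ae_le_def)
  then have "measure lambda_k (space lambda_k - V) = 0" by (simp add: measure_def)
  then have V1: "measure lambda_k V = 1" using P.prob_compl[OF Vm] by simp
  define U where "U n = (\<Union>k<n. D (from_nat k))" for n
  have Um: "U n \<in> sets lambda_k" for n unfolding U_def using Dm by auto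
  have inc: "incseq U" unfolding U_def incseq_def by (auto intro: order.strict_trans2)
  have UV: "(\<Union>n. U n) = V"
  proof
    show "(\<Union>n. U n) \<subseteq> V" unfolding U_def V_def by auto
    show "V \<subseteq> (\<Union>n. U n)"
    proof
      fix x assume "x \<in> V"
      then obtain c where "x \<in> D c" unfolding V_def by auto
      then have "x \<in> U (Suc (to_nat c))" unfolding U_def by force
      then show "x \<in> (\<Union>n. U n)" by blast
    qed
  qed
  have "(\<lambda>n. measure lambda_k (U n)) \<longlonglongrightarrow> 1"
    using P.finite_Lim_measure_incseq[OF _ inc] Um UV V1 by auto
  then have "\<forall>\<^sub>F n in sequentially. measure lambda_k (U n) > 1/2"
    by (rule order_tendstoD) simp
  then obtain n where n: "measure lambda_k (U n) > 1/2"
    by (auto simp: eventually_sequentially)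
  define As :: "'a list" where "As = map from_nat [0..<n]"
  have UA: "(\<Union>a\<in>set As. D a) = U n" unfolding As_def U_def by auto
  have eq: "2 * sum_list (map (\<lambda>c. measure lambda_k (D c \<inter> space lambda_k)) (xalg As))
         = 2 ^ length As * measure lambda_k (U n \<inter> space lambda_k)"
    using P.sum_xalg[OF Dm Dbot Dxr, of "space lambda_k" As] UA by simp
  have sp: "\<And>X. X \<in> sets lambda_k \<Longrightarrow> X \<inter> space lambda_k = X"
    using sets.sets_into_space by blast
  have lt: "sum_list (map (\<lambda>c. measure lambda_k (D c \<inter> space lambda_k)) (xalg As))
     < real (length (xalg As)) * (measure lambda_k (U n) / 2)"
  proof (rule sum_list_lt)
    show "xalg As \<noteq> []" using length_xalg[of As] by (metis list.size(3) power_not_zero zero_neq_numeral)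
    fix c
    have "measure lambda_k (D c) \<le> 1/4 - \<epsilon>" using contra by (auto simp: D_def not_less)
    then show "measure lambda_k (D c \<inter> space lambda_k) < measure lambda_k (U n) / 2"
      using sp[OF Dm] n assms(5) by simp
  qed
  show False using eq lt sp[OF Um] length_xalg[of As] by simp
qed
end
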